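(* Let $G$ be a bipartite simple graph with stable sets $X$ and $Y$, suppose $G\cong H_1\oplus H_2$ is a decomposition of $G$, and let $n\ge1$. If $G$ is edge-magic (respectively, super edge-magic), then $S_{2n}(G;H_1,H_2)$ is edge-magic (respectively, super edge-magic).
   Context: For a $(p,q)$-graph $G$ ($p$ vertices, $q$ edges), an edge-magic labeling is a bijection $f:V(G)\cup E(G)\to[1,p+q]$ such that $f(x)+f(xy)+f(y)$ is constant for every edge $xy$; it is super edge-magic if moreover $f(V(G))=[1,p]$. A decomposition $G\cong H_1\oplus H_2$ means $H_1,H_2$ are subgraphs of $G$ whose edge sets partition $E(G)$. Writing $X=\{x_i\}_{i=1}^s$, $Y=\{y_j\}_{j=1}^t$, $S_{2n}(G;H_1,H_2)$ is the graph with vertex set $X\cup Y\cup\bigcup_{k=1}^n X_k\cup\bigcup_{k=1}^n Y_k$, where $X_k=\{x_i^k\}_{i=1}^s$, $Y_k=\{y_j^k\}_{j=1}^t$ are new vertices, and edge set $E(G)\cup\{x_iy_j^k: x_iy_j\in E(H_1),\,k\in[1,n]\}\cup\{x_i^ky_j: x_iy_j\in E(H_2),\,k\in[1,n]\}$. *)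

theory Defs
  imports Main
begin

definition simple_graph :: "'v set \<Rightarrow> 'v set set \<Rightarrow> bool" where
  "simple_graph V E \<longleftrightarrow> finite V \<and>
     (\<forall>e\<in>E. \<exists>x y. x \<in> V \<and> y \<in> V \<and> x \<noteq> y \<and> e = {x, y})"

definition bipartite_with :: "'v set \<Rightarrow> 'v set set \<Rightarrow> 'v set \<Rightarrow> 'v set \<Rightarrow> bool" where
  "bipartite_with V E X Y \<longleftrightarrow> X \<union> Y = V \<and> X \<inter> Y = {} \<and>
     (\<forall>e\<in>E. \<exists>x y. x \<in> X \<and> y \<in> Y \<and> e = {x, y})"

definition edge_magic_labeling ::
  "'v set \<Rightarrow> 'v set set \<Rightarrow> ('v + 'v set \<Rightarrow> nat) \<Rightarrow> bool" where
  "edge_magic_labeling V E f \<longleftrightarrow>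
     bij_betw f (Inl ` V \<union> Inr ` E) {1 .. card V + card E} \<and>
     (\<exists>k. \<forall>x y. {x, y} \<in> E \<longrightarrow> f (Inl x) + f (Inr {x, y}) + f (Inl y) = k)"

definition super_edge_magic_labeling ::
  "'v set \<Rightarrow> 'v set set \<Rightarrow> ('v + 'v set \<Rightarrow> nat) \<Rightarrow> bool" where
  "super_edge_magic_labeling V E f \<longleftrightarrow>
     edge_magic_labeling V E f \<and> f ` (Inl ` V) = {1 .. card V}"

definition edge_magic :: "'v set \<Rightarrow> 'v set set \<Rightarrow> bool" where
  "edge_magic V E \<longleftrightarrow> (\<exists>f. edge_magic_labeling V E f)"

definition super_edge_magic :: "'v set \<Rightarrow> 'v set set \<Rightarrow> bool" where
  "super_edge_magic V E \<longleftrightarrow> (\<exists>f. super_edge_magic_labeling V E f)"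

text \<open>The graph S_{2n}(G;H1,H2). Vertex v of G is encoded as (v,0); the k-th copy
  v^k (k \<in> [1,n]) of v as (v,k). E1, E2 are the edge sets of H1, H2.\<close>
definition S2n_vertices :: "'v set \<Rightarrow> 'v set \<Rightarrow> nat \<Rightarrow> ('v \<times> nat) set" where
  "S2n_vertices X Y n = (X \<union> Y) \<times> {0} \<union> X \<times> {1..n} \<union> Y \<times> {1..n}"

definition S2n_edges ::
  "'v set \<Rightarrow> 'v set \<Rightarrow> 'v set set \<Rightarrow> 'v set set \<Rightarrow> 'v set set \<Rightarrow> nat \<Rightarrow> ('v \<times> nat) set set" where
  "S2n_edges X Y E E1 E2 n =
     {{(x, 0), (y, 0)} | x y. {x, y} \<in> E}
   \<union> {{(x, 0), (y, k)} | x y k. x \<in> X \<and> y \<in> Y \<and> {x, y} \<in> E1 \<and> k \<in> {1..n}}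
   \<union> {{(x, k), (y, 0)} | x y k. x \<in> X \<and> y \<in> Y \<and> {x, y} \<in> E2 \<and> k \<in> {1..n}}"

end

theory Submission
  imports Defs
begin

lemma arith_inj:
  fixes N a a' c c' :: nat
  assumes "c < N" "c' < N" "N*a + c = N*a' + c'"
  shows "a = a' \<and> c = c'"
proof -
  have N: "N > 0" using assms by auto
  have "c = (N*a + c) mod N" using assms(1) by simp
  moreover have "c' = (N*a' + c') mod N" using assms(2) by simp
  ultimately have cc: "c = c'" using assms(3) by metis
  then have "N*a = N*a'" using assms by simp
  then show ?thesis using N cc by simp
qed

lemma arith_img:
  fixes N m :: nat
  assumes "N > 0"
  shows "(\<lambda>(a,c). N*(a-1)+c+1) ` ({1..m}\<times>{0..<N}) = {1..N*m}"
proof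
  show "(\<lambda>(a,c). N*(a-1)+c+1) ` ({1..m}\<times>{0..<N}) \<subseteq> {1..N*m}"
  proof
    fix t assume "t \<in> (\<lambda>(a,c). N*(a-1)+c+1) ` ({1..m}\<times>{0..<N})"
    then obtain a c where a: "1 \<le> a" "a \<le> m" and c: "c < N" and t: "t = N*(a-1)+c+1" by auto
    then obtain A where A: "a = Suc A" by (cases a) auto
    have "N*A + c + 1 \<le> N*A + N" using c by simp
    also have "\<dots> = N * a" using A by simp
    also have "\<dots> \<le> N*m" using a by simp
    finally show "t \<in> {1..N*m}" using A t by simp
  qed
next
  show "{1..N*m} \<subseteq> (\<lambda>(a,c). N*(a-1)+c+1) ` ({1..m}\<times>{0..<N})"
  proof
    fix t assume t: "t \<in> {1..N*m}"
    define a where "a = (t-1) div N + 1"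
    define c where "c = (t-1) mod N"
    have "t - 1 < N*m" using t by auto
    then have "(t-1) div N < m" using assms by (simp add: div_less_iff_less_mult mult.commute)
    then have am: "a \<in> {1..m}" unfolding a_def by auto
    have cN: "c \<in> {0..<N}" unfolding c_def using assms by auto
    have "N*(a-1)+c+1 = t" unfolding a_def c_def using t by (simp add: mult.commute)
    then show "t \<in> (\<lambda>(a,c). N*(a-1)+c+1) ` ({1..m}\<times>{0..<N})"
      using am cN by force
  qed
qed

lemma E'I1: "{x,y} \<in> E \<Longrightarrow> {(x,0),(y,0)} \<in> S2n_edges X Y E E1 E2 n"
  unfolding S2n_edges_def by blast

lemma E'I2: "x \<in> X \<Longrightarrow> y \<in> Y \<Longrightarrow> {x,y} \<in> E1 \<Longrightarrow> k \<in> {1..n} \<Longrightarrow> {(x,0),(y,k)} \<in> S2n_edges X Y E E1 E2 n"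
  unfolding S2n_edges_def by blast

lemma E'I3: "x \<in> X \<Longrightarrow> y \<in> Y \<Longrightarrow> {x,y} \<in> E2 \<Longrightarrow> k \<in> {1..n} \<Longrightarrow> {(x,k),(y,0)} \<in> S2n_edges X Y E E1 E2 n"
  unfolding S2n_edges_def by blast

lemma E'_cases:
  assumes "e' \<in> S2n_edges X Y E E1 E2 n"
  obtains (a) x y where "e' = {(x,0),(y,0)}" "{x,y} \<in> E"
   | (b) x y k where "e' = {(x,0),(y,k)}" "x \<in> X" "y \<in> Y" "{x,y} \<in> E1" "k \<in> {1..n}"
   | (c) x y k where "e' = {(x,k),(y,0)}" "x \<in> X" "y \<in> Y" "{x,y} \<in> E2" "k \<in> {1..n}"
  using assms unfolding S2n_edges_def by blast

definition xe :: "'v set \<Rightarrow> 'v set \<Rightarrow> 'v" where "xe X e = (SOME x. x \<in> X \<and> x \<in> e)"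

lemma xe_eq:
  assumes "X \<inter> Y = {}" "x \<in> X" "y \<in> Y"
  shows "xe X {x,y} = x" "xe Y {x,y} = y"
proof -
  have "xe X {x,y} \<in> X \<and> xe X {x,y} \<in> {x,y}" unfolding xe_def by (rule someI[of _ x]) (use assms in auto)
  then show "xe X {x,y} = x" using assms by auto
  have "xe Y {x,y} \<in> Y \<and> xe Y {x,y} \<in> {x,y}" unfolding xe_def by (rule someI[of _ y]) (use assms in auto)
  then show "xe Y {x,y} = y" using assms by auto
qed

lemma key:
  fixes V X Y :: "'v set" and E E1 E2 :: "'v set set" and n :: nat
    and f :: "'v + 'v set \<Rightarrow> nat"
  assumes sg: "simple_graph V E"
    and bp: "bipartite_with V E X Y"
    and E12: "E1 \<union> E2 = E" "E1 \<inter> E2 = {}"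
    and fl: "edge_magic_labeling V E f"
  defines "N \<equiv> Suc n"
    and "g \<equiv> (\<lambda>u. case u of Inl (v,c) \<Rightarrow> Suc n*(f(Inl v)-1)+c+1
               | Inr e \<Rightarrow> Suc n*(f(Inr (fst`e))-1) + (n - (\<Sum>p\<in>e. snd p)) + 1)"
  shows "edge_magic_labeling (S2n_vertices X Y n) (S2n_edges X Y E E1 E2 n) g \<and>
     (f ` Inl ` V = {1..card V} \<longrightarrow>
        g ` Inl ` S2n_vertices X Y n = {1..card (S2n_vertices X Y n)})"
proof -
  have gN: "g = (\<lambda>u. case u of Inl (v,c) \<Rightarrow> N*(f(Inl v)-1)+c+1
               | Inr e \<Rightarrow> N*(f(Inr (fst`e))-1) + (n - (\<Sum>p\<in>e. snd p)) + 1)"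
    unfolding g_def N_def ..
  define V' where "V' = S2n_vertices X Y n"
  define E' where "E' = S2n_edges X Y E E1 E2 n"
  define D where "D = Inl ` V \<union> Inr ` E"
  define D' where "D' = Inl ` V' \<union> Inr ` E'"
  define C where "C = {0..<N}"
  define m where "m = card V + card E"
  define h where "h = (\<lambda>(d,c). N*(f d - 1) + c + 1)"
  define \<psi> :: "('v + 'v set) \<times> nat \<Rightarrow> ('v \<times> nat) + ('v \<times> nat) set" where "\<psi> = (\<lambda>(d,c). case d of Inl v \<Rightarrow> Inl (v,c)
     | Inr e \<Rightarrow> Inr (if e \<in> E1 then {(xe X e,0),(xe Y e,n-c)} else {(xe X e,n-c),(xe Y e,0)}))"
  have XY: "X \<union> Y = V" "X \<inter> Y = {}" and bpE: "\<And>e. e \<in> E \<Longrightarrow> \<exists>x y. x \<in> X \<and> y \<in> Y \<and> e = {x,y}"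
    using bp unfolding bipartite_with_def by blast+
  have sg': "finite V \<and> (\<forall>e\<in>E. \<exists>x y. x \<in> V \<and> y \<in> V \<and> x \<noteq> y \<and> e = {x, y})"
    using sg unfolding simple_graph_def .
  have finV: "finite V" using sg' by blast
  have EPow: "E \<subseteq> Pow V"
  proof
    fix e assume "e \<in> E"
    then obtain x y where "x \<in> V" "y \<in> V" "e = {x,y}" using sg' by blast
    then show "e \<in> Pow V" by simp
  qed
  have finE: "finite E" by (rule finite_subset[OF EPow]) (simp add: finV)
  have finD: "finite D" unfolding D_def using finV finE by simp
  have fbij: "bij_betw f D {1..m}" and fK: "\<exists>K. \<forall>x y. {x, y} \<in> E \<longrightarrow> f (Inl x) + f (Inr {x, y}) + f (Inl y) = K"
    using fl unfolding edge_magic_labeling_def D_def m_def by blast+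
  have fge: "\<And>d. d \<in> D \<Longrightarrow> f d \<ge> 1" using fbij unfolding bij_betw_def by auto
  have V'eq: "V' = V \<times> C" unfolding V'_def S2n_vertices_def C_def N_def using XY(1)
    by (auto simp: less_Suc_eq_le)
  have xy: "\<And>e. e \<in> E \<Longrightarrow> xe X e \<in> X \<and> xe Y e \<in> Y \<and> e = {xe X e, xe Y e}"
  proof -
    fix e assume "e \<in> E"
    then obtain x y where "x \<in> X" "y \<in> Y" "e = {x,y}" using bpE by blast
    then show "xe X e \<in> X \<and> xe Y e \<in> Y \<and> e = {xe X e, xe Y e}" using xe_eq[OF XY(2)] by auto
  qed
  have psi_img: "\<psi> ` (D \<times> C) = D'"
  proof
    show "\<psi> ` (D \<times> C) \<subseteq> D'"
    proof clarify
      fix d c assume d: "d \<in> D" and c: "c \<in> C"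
      show "\<psi> (d,c) \<in> D'"
      proof (cases d)
        case (Inl v)
        then show ?thesis using d c unfolding \<psi>_def D'_def D_def V'eq by auto
      next
        case (Inr e)
        then have e: "e \<in> E" using d unfolding D_def by auto
        have cn: "c \<le> n" using c unfolding C_def N_def by auto
        show ?thesis
        proof (cases "e \<in> E1")
          case True
          have "{(xe X e,0),(xe Y e,n-c)} \<in> E'"
          proof (cases "c = n")
            case True
            have "{xe X e, xe Y e} \<in> E" using xy[OF e] e by simp
            then show ?thesis using True unfolding E'_def by (simp add: E'I1)
          next
            case False
            have "n - c \<in> {1..n}" using False cn by auto
            then show ?thesis unfolding E'_def using xy[OF e] \<open>e \<in> E1\<close> E'I2[of "xe X e" X "xe Y e" Y E1 "n-c" n E E2] by simp
          qed
          then show ?thesis using True Inr unfolding \<psi>_def D'_def by auto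
        next
          case False
          then have e2: "e \<in> E2" using e E12 by auto
          have "{(xe X e,n-c),(xe Y e,0)} \<in> E'"
          proof (cases "c = n")
            case True
            have "{xe X e, xe Y e} \<in> E" using xy[OF e] e by simp
            then show ?thesis using True unfolding E'_def by (simp add: E'I1)
          next
            case False
            have "n - c \<in> {1..n}" using False cn by auto
            then show ?thesis unfolding E'_def using xy[OF e] e2 E'I3[of "xe X e" X "xe Y e" Y E2 "n-c" n E E1] by simp
          qed
          then show ?thesis using False Inr unfolding \<psi>_def D'_def by auto
        qed
      qed
    qed
  next
    show "D' \<subseteq> \<psi> ` (D \<times> C)"
    proof
      fix u assume u: "u \<in> D'"
      show "u \<in> \<psi> ` (D \<times> C)"
      proof (cases u)
        case (Inl w)
        then obtain v c where "w = (v,c)" "v \<in> V" "c \<in> C" using u unfolding D'_def V'eq by auto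
        then have "u = \<psi> (Inl v, c)" "(Inl v, c) \<in> D \<times> C" using Inl unfolding \<psi>_def D_def by auto
        then show ?thesis by blast
      next
        case (Inr e')
        then have "e' \<in> E'" using u unfolding D'_def by auto
        then consider (a) x y where "e' = {(x,0),(y,0)}" "{x,y} \<in> E"
          | (b) x y k where "e' = {(x,0),(y,k)}" "x \<in> X" "y \<in> Y" "{x,y} \<in> E1" "k \<in> {1..n}"
          | (c) x y k where "e' = {(x,k),(y,0)}" "x \<in> X" "y \<in> Y" "{x,y} \<in> E2" "k \<in> {1..n}"
          unfolding E'_def by (rule E'_cases) blast+
        then show ?thesis
        proof cases
          case a
          define e where "e = {x,y}"
          have eE: "e \<in> E" using a unfolding e_def by simp
          have nC: "n \<in> C" unfolding C_def N_def by simp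
          have "{(xe X e,0),(xe Y e,0)} = e'"
          proof -
            obtain x0 y0 where "x0 \<in> X" "y0 \<in> Y" "e = {x0,y0}" using bpE[OF eE] by blast
            then have "xe X e = x0" "xe Y e = y0" using xe_eq[OF XY(2)] by auto
            moreover have "{(x0,0::nat),(y0,0)} = {(x,0),(y,0)}" using \<open>e = {x0,y0}\<close> unfolding e_def
              by (auto simp: doubleton_eq_iff)
            ultimately show ?thesis using a by simp
          qed
          then have "\<psi> (Inr e, n) = u" unfolding \<psi>_def using Inr by simp
          moreover have "(Inr e, n) \<in> D \<times> C" using eE nC unfolding D_def by simp
          ultimately show ?thesis by (metis image_eqI)
        next
          case b
          define e where "e = {x,y}"
          have eE: "e \<in> E" using b E12 unfolding e_def by auto
          have nC: "n - k \<in> C" unfolding C_def N_def by simp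
          have kn: "n - (n - k) = k" using b(5) by simp
          have xx: "xe X e = x" "xe Y e = y" using xe_eq[OF XY(2) b(2) b(3)] unfolding e_def by simp_all
          have "\<psi> (Inr e, n - k) = u" unfolding \<psi>_def using Inr b(1,4) kn xx unfolding e_def by simp
          moreover have "(Inr e, n - k) \<in> D \<times> C" using eE nC unfolding D_def by simp
          ultimately show ?thesis by (metis image_eqI)
        next
          case c
          define e where "e = {x,y}"
          have eE: "e \<in> E" using c E12 unfolding e_def by auto
          have ne: "e \<notin> E1" using c E12 unfolding e_def by auto
          have nC: "n - k \<in> C" unfolding C_def N_def by simp
          have kn: "n - (n - k) = k" using c(5) by simp
          have xx: "xe X e = x" "xe Y e = y" using xe_eq[OF XY(2) c(2) c(3)] unfolding e_def by simp_all
          have "\<psi> (Inr e, n - k) = u" unfolding \<psi>_def using Inr c(1) ne kn xx unfolding e_def by simp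
          moreover have "(Inr e, n - k) \<in> D \<times> C" using eE nC unfolding D_def by simp
          ultimately show ?thesis by (metis image_eqI)
        qed
      qed
    qed
  qed
  have gpsi: "\<And>a. a \<in> D \<times> C \<Longrightarrow> g (\<psi> a) = h a"
  proof -
    fix a assume a: "a \<in> D \<times> C"
    then obtain d c where dc: "a = (d,c)" "d \<in> D" "c \<in> C" by auto
    have cn: "c \<le> n" using dc unfolding C_def N_def by auto
    show "g (\<psi> a) = h a"
    proof (cases d)
      case (Inl v)
      then show ?thesis using dc unfolding gN h_def \<psi>_def by simp
    next
      case (Inr e)
      then have e: "e \<in> E" using dc unfolding D_def by auto
      have ne: "xe X e \<noteq> xe Y e" using xy[OF e] XY(2) by auto
      show ?thesis
      proof (cases "e \<in> E1")
        case True
        have "fst ` {(xe X e,0),(xe Y e,n-c)} = e" using xy[OF e] by auto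
        moreover have "(\<Sum>p\<in>{(xe X e,0::nat),(xe Y e,n-c)}. snd p) = n - c" using ne by simp
        ultimately show ?thesis using dc Inr True cn unfolding gN h_def \<psi>_def by simp
      next
        case False
        have "fst ` {(xe X e,n-c),(xe Y e,0)} = e" using xy[OF e] by auto
        moreover have "(\<Sum>p\<in>{(xe X e,n-c),(xe Y e,0::nat)}. snd p) = n - c" using ne by simp
        ultimately show ?thesis using dc Inr False cn unfolding gN h_def \<psi>_def by simp
      qed
    qed
  qed
  have hinj: "inj_on h (D \<times> C)"
  proof (rule inj_onI)
    fix a b assume a: "a \<in> D \<times> C" and b: "b \<in> D \<times> C" and hab: "h a = h b"
    obtain d c d2 c2 where ab: "a = (d,c)" "b = (d2,c2)" by fastforce
    have "f d - 1 = f d2 - 1 \<and> c = c2"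
      using arith_inj[of c N c2 "f d - 1" "f d2 - 1"] hab a b ab unfolding h_def C_def by auto
    moreover have "f d \<ge> 1" "f d2 \<ge> 1" using fge a b ab by auto
    ultimately have "f d = f d2" "c = c2" by auto
    then show "a = b" using fbij a b ab unfolding bij_betw_def inj_on_def by auto
  qed
  have hcomp: "h = (\<lambda>(a,c). N*(a-1)+c+1) \<circ> map_prod f id"
    unfolding h_def by (auto simp: fun_eq_iff)
  have himg_gen: "\<And>S. h ` (S \<times> C) = (\<lambda>(a,c). N*(a-1)+c+1) ` (f ` S \<times> C)"
    unfolding hcomp image_comp[symmetric] by (subst map_prod_surj_on[OF refl, of id C C]) simp_all
  have himg: "h ` (D \<times> C) = {1..N*m}"
    using himg_gen[of D] fbij arith_img[of N m] unfolding bij_betw_def C_def N_def by simp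
  have "g ` D' = (g \<circ> \<psi>) ` (D \<times> C)" unfolding psi_img[symmetric] by (simp add: image_comp)
  also have "\<dots> = h ` (D \<times> C)" using gpsi by (intro image_cong) auto
  finally have gimg: "g ` D' = {1..N*m}" using himg by simp
  have ginj: "inj_on g D'"
  proof (rule inj_onI)
    fix u w assume "u \<in> D'" "w \<in> D'" "g u = g w"
    then obtain a b where "a \<in> D \<times> C" "b \<in> D \<times> C" "u = \<psi> a" "w = \<psi> b" "g u = g w"
      using psi_img by blast
    then show "u = w" using gpsi hinj unfolding inj_on_def by metis
  qed
  have gbij: "bij_betw g D' {1..N*m}" using ginj gimg unfolding bij_betw_def by simp
  have finD': "finite D'" unfolding psi_img[symmetric] using finD unfolding C_def by auto
  have finV': "finite V'" and finE': "finite E'" using finD' unfolding D'_def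
    by (auto dest: finite_imageD)
  have cardD': "card D' = card V' + card E'" unfolding D'_def
    by (subst card_Un_disjoint) (auto simp: finV' finE' card_image)
  have cardD'2: "card D' = N*m" by (simp add: bij_betw_same_card[OF gbij])
  have part1: "edge_magic_labeling V' E' g"
    unfolding edge_magic_labeling_def
  proof
    show "bij_betw g (Inl ` V' \<union> Inr ` E') {1..card V' + card E'}"
      using gbij cardD' cardD'2 unfolding D'_def by simp
  next
    obtain K where K: "\<And>x y. {x, y} \<in> E \<Longrightarrow> f (Inl x) + f (Inr {x, y}) + f (Inl y) = K" using fK by blast
    have "\<forall>u w. {u, w} \<in> E' \<longrightarrow> g (Inl u) + g (Inr {u, w}) + g (Inl w) = N*(K-3)+n+3"
    proof (intro allI impI)
      fix u w assume uw: "{u,w} \<in> E'"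
      consider (a) x y where "{u,w} = {(x,0),(y,0)}" "{x,y} \<in> E"
          | (b) x y k where "{u,w} = {(x,0),(y,k)}" "{x,y} \<in> E1" "k \<in> {1..n}"
          | (c) x y k where "{u,w} = {(x,k),(y,0)}" "{x,y} \<in> E2" "k \<in> {1..n}"
        using uw unfolding E'_def by (rule E'_cases) blast+
      then have "\<exists>a b c1 c2. {a,b} \<in> E \<and> c1 + c2 \<le> n \<and> {u,w} = {(a,c1),(b,c2)}"
      proof cases
        case a then show ?thesis by (intro exI[of _ x] exI[of _ y] exI[of _ 0] exI[of _ 0]) simp
      next
        case b
        have "{x,y} \<in> E" using b(2) E12(1) by blast
        then show ?thesis using b by (intro exI[of _ x] exI[of _ y] exI[of _ 0] exI[of _ k]) simp
      next
        case c
        have "{x,y} \<in> E" using c(2) E12(1) by blast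
        then show ?thesis using c by (intro exI[of _ x] exI[of _ y] exI[of _ k] exI[of _ 0]) simp
      qed
      then obtain a b c1 c2 where ab: "{a,b} \<in> E" "c1 + c2 \<le> n" "{u,w} = {(a,c1),(b,c2)}" by blast
      have anb: "a \<noteq> b"
      proof
        assume "a = b"
        obtain x y where "x \<noteq> y" "{a,b} = {x,y}" using sg' ab(1) by blast
        then show False using \<open>a = b\<close> by (auto simp: doubleton_eq_iff)
      qed
      have fa: "f (Inl a) \<ge> 1" "f (Inl b) \<ge> 1" "f (Inr {a,b}) \<ge> 1"
        using fge ab(1) EPow unfolding D_def by auto
      have Kab: "f (Inl a) + f (Inr {a,b}) + f (Inl b) = K" using K ab(1) by blast
      have fst: "fst ` {(a,c1),(b,c2)} = {a,b}" by simp
      have sm: "(\<Sum>p\<in>{(a,c1),(b,c2)}. snd p) = c1 + c2" using anb by simp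
      obtain A B Q where ABQ: "f (Inl a) = Suc A" "f (Inl b) = Suc B" "f (Inr {a,b}) = Suc Q"
        using fa by (metis Suc_le_D One_nat_def)
      have KK: "K = A + B + Q + 3" using Kab ABQ by simp
      have "g (Inl (a,c1)) + g (Inr {(a,c1),(b,c2)}) + g (Inl (b,c2))
          = N*A + N*Q + N*B + (c1 + (n - (c1+c2)) + c2) + 3"
        unfolding gN using fst sm ABQ by simp
      also have "\<dots> = N*(K-3)+n+3" using KK ab(2) by (simp add: algebra_simps)
      finally have gs: "g (Inl (a,c1)) + g (Inr {(a,c1),(b,c2)}) + g (Inl (b,c2)) = N*(K-3)+n+3" .
      from ab(3) have "(u=(a,c1) \<and> w=(b,c2)) \<or> (u=(b,c2) \<and> w=(a,c1))" by (simp add: doubleton_eq_iff)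
      then show "g (Inl u) + g (Inr {u, w}) + g (Inl w) = N*(K-3)+n+3"
        using gs by (elim disjE) (simp_all add: insert_commute add.commute add.left_commute)
    qed
    then show "\<exists>k. \<forall>x y. {x, y} \<in> E' \<longrightarrow> g (Inl x) + g (Inr {x, y}) + g (Inl y) = k" by blast
  qed
  have part2: "f ` Inl ` V = {1..card V} \<longrightarrow> g ` Inl ` V' = {1..card V'}"
  proof
    assume sv: "f ` Inl ` V = {1..card V}"
    have "g ` Inl ` V' = h ` (Inl ` V \<times> C)"
    proof -
      have "Inl ` V' = \<psi> ` (Inl ` V \<times> C)" unfolding V'eq \<psi>_def by force
      then have "g ` Inl ` V' = (g \<circ> \<psi>) ` (Inl ` V \<times> C)" by (simp add: image_comp)
      also have "\<dots> = h ` (Inl ` V \<times> C)" using gpsi unfolding D_def by (intro image_cong) auto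
      finally show ?thesis .
    qed
    also have "\<dots> = {1..N * card V}" using himg_gen[of "Inl ` V"] sv arith_img[of N "card V"]
      unfolding C_def N_def by simp
    also have "N * card V = card V'" unfolding V'eq C_def by (simp add: card_cartesian_product)
    finally show "g ` Inl ` V' = {1..card V'}" .
  qed
  show ?thesis using part1 part2 unfolding V'_def E'_def by simp
qed

theorem mainTheorem9:
  fixes V X Y :: "'v set" and E E1 E2 :: "'v set set" and n :: nat
  assumes "simple_graph V E"
    and "bipartite_with V E X Y"
    and "E1 \<subseteq> E" and "E2 \<subseteq> E" and "E1 \<union> E2 = E" and "E1 \<inter> E2 = {}"
    and "n \<ge> 1"
  shows "(edge_magic V E \<longrightarrow>
           edge_magic (S2n_vertices X Y n) (S2n_edges X Y E E1 E2 n))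
       \<and> (super_edge_magic V E \<longrightarrow>
           super_edge_magic (S2n_vertices X Y n) (S2n_edges X Y E E1 E2 n))"
proof (intro conjI impI)
  assume "edge_magic V E"
  then obtain f where f: "edge_magic_labeling V E f" unfolding edge_magic_def by blast
  show "edge_magic (S2n_vertices X Y n) (S2n_edges X Y E E1 E2 n)"
    using key[OF assms(1,2,5,6) f] unfolding edge_magic_def by blast
next
  assume "super_edge_magic V E"
  then obtain f where f: "edge_magic_labeling V E f" "f ` Inl ` V = {1..card V}"
    unfolding super_edge_magic_def super_edge_magic_labeling_def by blast
  show "super_edge_magic (S2n_vertices X Y n) (S2n_edges X Y E E1 E2 n)"
    using key[OF assms(1,2,5,6) f(1)] f(2)
    unfolding super_edge_magic_def super_edge_magic_labeling_def by blast
qed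

end
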